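(* Let $\Phi$ be a real $N\times d$ matrix satisfying the Restricted Isometry Condition with parameters $(2n,\varepsilon)$, $\varepsilon = 0.03/\sqrt{\log n}$, let $v \ne 0$ be $n$-sparse, $x = \Phi v$, and consider an iteration of ROMP run on $x$ with sparsity level $n$, with $I$ the index set and $r\ne0$ the residual at the start of that iteration, $u = \Phi^* r$, and $J$ the set chosen in the identification step of that iteration. Let $v_0 = v|_{\mathrm{supp}(v)\setminus I}$ (equal to $v$ on $\mathrm{supp}(v)\setminus I$, $0$ elsewhere). Then $\|u|_J\|_2 \ge 0.8\,\|v_0\|_2$.
   Context: A vector is $n$-sparse if it has at most $n$ nonzero coordinates. $\Phi$ satisfies the Restricted Isometry Condition with parameters $(m,\varepsilon)$ if $(1-\varepsilon)\|w\|_2 \le \|\Phi w\|_2 \le (1+\varepsilon)\|w\|_2$ for all $m$-sparse $w$. $y|_T$ is the restriction of $y$ to coordinates in $T$. ROMP with input $x$ and sparsity level $n$: Initialize $I=\emptyset$, $r=x$. Repeat until $r=0$: (Identify) $u=\Phi^*r$, choose a set $J$ of the $n$ biggest coordinates of $u$ in magnitude, or all nonzero coordinates of $u$, whichever set is smaller; (Regularize) among subsets $J_0\subset J$ with $|u(i)|\le 2|u(j)|$ for all $i,j\in J_0$, choose one maximizing $\|u|_{J_0}\|_2$; (Update) $I\leftarrow I\cup J_0$, $y=\operatorname{argmin}_{z\in\mathbb{R}^I}\|x-\Phi z\|_2$, $r=x-\Phi y$. Output $I$. *)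

theory Defs
  imports "HOL-Analysis.Analysis"
begin

text \<open>Vectors in R^d are modelled as real^'d (index type 'd finite); an N x d real
matrix is real^'d^'N, and the adjoint Phi^* is transpose Phi.\<close>

definition supp :: "real^'d \<Rightarrow> 'd set" where
  "supp w = {i. w $ i \<noteq> 0}"

definition sparse :: "nat \<Rightarrow> real^'d \<Rightarrow> bool" where
  "sparse n w \<longleftrightarrow> card (supp w) \<le> n"

definition RIC :: "real^'d^'N \<Rightarrow> nat \<Rightarrow> real \<Rightarrow> bool" where
  "RIC Phi m eps \<longleftrightarrow> (\<forall>w. sparse m w \<longrightarrow>
      (1 - eps) * norm w \<le> norm (Phi *v w) \<and> norm (Phi *v w) \<le> (1 + eps) * norm w)"

definition restr :: "real^'d \<Rightarrow> 'd set \<Rightarrow> real^'d" where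
  "restr y T = (\<chi> i. if i \<in> T then y $ i else 0)"

definition lsq_residual :: "real^'d^'N \<Rightarrow> real^'N \<Rightarrow> 'd set \<Rightarrow> real^'N \<Rightarrow> bool" where
  "lsq_residual Phi x I r \<longleftrightarrow> (\<exists>y. supp y \<subseteq> I \<and> r = x - Phi *v y \<and>
      (\<forall>z. supp z \<subseteq> I \<longrightarrow> norm (x - Phi *v y) \<le> norm (x - Phi *v z)))"

definition romp_identify :: "nat \<Rightarrow> real^'d \<Rightarrow> 'd set \<Rightarrow> bool" where
  "romp_identify n u J \<longleftrightarrow> J \<subseteq> supp u \<and> card J = min n (card (supp u)) \<and>
      (\<forall>i\<in>J. \<forall>j. j \<notin> J \<longrightarrow> \<bar>u $ j\<bar> \<le> \<bar>u $ i\<bar>)"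

definition comparable :: "real^'d \<Rightarrow> 'd set \<Rightarrow> bool" where
  "comparable u J0 \<longleftrightarrow> (\<forall>i\<in>J0. \<forall>j\<in>J0. \<bar>u $ i\<bar> \<le> 2 * \<bar>u $ j\<bar>)"

definition romp_regularize :: "real^'d \<Rightarrow> 'd set \<Rightarrow> 'd set \<Rightarrow> bool" where
  "romp_regularize u J J0 \<longleftrightarrow> J0 \<subseteq> J \<and> comparable u J0 \<and>
      (\<forall>K. K \<subseteq> J \<longrightarrow> comparable u K \<longrightarrow> norm (restr u K) \<le> norm (restr u J0))"

text \<open>Index sets I occurring at the start of some iteration of ROMP on input x with
sparsity level n (iterations continue only while the residual is nonzero).\<close>
inductive romp_reach :: "real^'d^'N \<Rightarrow> real^'N \<Rightarrow> nat \<Rightarrow> 'd set \<Rightarrow> bool"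
  for Phi x n where
  init: "romp_reach Phi x n {}"
| step: "\<lbrakk> romp_reach Phi x n I; lsq_residual Phi x I r; r \<noteq> 0;
           u = transpose Phi *v r; romp_identify n u J; romp_regularize u J J0 \<rbrakk>
         \<Longrightarrow> romp_reach Phi x n (I \<union> J0)"

end

theory Submission
  imports Defs
begin

lemma restr_nth[simp]: "restr y T $ i = (if i \<in> T then y$i else 0)"
  by (simp add: restr_def)

lemma norm_sq_vec: "(norm (y::real^'d))^2 = (\<Sum>i\<in>UNIV. (y$i)^2)"
  unfolding power2_norm_eq_inner inner_vec_def by (simp add: power2_eq_square)

lemma norm_restr_sq: "(norm (restr y T))^2 = (\<Sum>i\<in>T. (y$i)^2)"
proof -
  have "(norm (restr y T))^2 = (\<Sum>i\<in>UNIV. (if i \<in> T then (y$i)^2 else 0))"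
    unfolding norm_sq_vec by (rule sum.cong) auto
  also have "\<dots> = (\<Sum>i\<in>T. (y$i)^2)"
    by (simp add: sum.If_cases)
  finally show ?thesis .
qed

lemma supp_restr: "supp (restr y T) \<subseteq> T \<inter> supp y"
  by (auto simp: supp_def)

lemma sparse_mono: "supp w \<subseteq> A \<Longrightarrow> card A \<le> m \<Longrightarrow> sparse m (w::real^'d)"
  unfolding sparse_def by (meson card_mono finite order_trans)

lemma transpose_inner: "(transpose Phi *v r) \<bullet> z = r \<bullet> ((Phi::real^'d^'N) *v z)"
  by (simp add: dot_lmul_matrix)

lemma supp_add: "supp (x + y) \<subseteq> supp x \<union> supp (y::real^'d)"
  by (auto simp: supp_def)
lemma supp_diff: "supp (x - y) \<subseteq> supp x \<union> supp (y::real^'d)"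
  by (auto simp: supp_def)
lemma supp_scaleR: "supp (c *\<^sub>R x) \<subseteq> supp (x::real^'d)"
  by (auto simp: supp_def)

lemma inner_disjoint: "supp x \<inter> supp y = {} \<Longrightarrow> x \<bullet> (y::real^'d) = 0"
  unfolding inner_vec_def supp_def by (rule sum.neutral) auto

lemma inner_restr: "supp z \<subseteq> T \<Longrightarrow> (y::real^'d) \<bullet> z = restr y T \<bullet> z"
  unfolding inner_vec_def supp_def by (rule sum.cong) auto

lemma quad0: fixes p A :: real assumes "\<And>t. 2*t*p \<le> t^2*A" "A \<ge> 0" shows "p = 0"
proof -
  have h: "2*(p/(A+1))*p \<le> (p/(A+1))^2*A" by (rule assms(1))
  have pos: "A + 1 > 0" using assms(2) by simp
  have e1: "2*(p/(A+1))*p = 2*(p^2/(A+1))" by (simp add: power2_eq_square)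
  have e2: "(p/(A+1))^2*A = (p^2/(A+1)) * (A/(A+1))" by (simp add: power2_eq_square)
  have le1: "A/(A+1) \<le> 1" using pos by simp
  have q: "p^2/(A+1) \<ge> 0" using pos by simp
  have "(p^2/(A+1)) * (A/(A+1)) \<le> (p^2/(A+1)) * 1"
    by (rule mult_left_mono[OF le1 q])
  hence "2*(p^2/(A+1)) \<le> p^2/(A+1)" using h e1 e2 by linarith
  hence "p^2/(A+1) \<le> 0" by linarith
  hence "p^2 \<le> 0" using pos by (simp add: divide_le_0_iff)
  thus ?thesis by simp
qed

lemma lsq_orth:
  fixes Phi :: "real^'d^'N"
  assumes "lsq_residual Phi x I r"
  obtains y where "supp y \<subseteq> I" "r = x - Phi *v y" "\<And>z. supp z \<subseteq> I \<Longrightarrow> r \<bullet> (Phi *v z) = 0"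
proof -
  obtain y where y: "supp y \<subseteq> I" "r = x - Phi *v y"
    and mn: "\<And>z. supp z \<subseteq> I \<Longrightarrow> norm (x - Phi *v y) \<le> norm (x - Phi *v z)"
    using assms unfolding lsq_residual_def by blast
  have "r \<bullet> (Phi *v z) = 0" if z: "supp z \<subseteq> I" for z
  proof -
    define a where "a = Phi *v z"
    define p where "p = r \<bullet> a"
    define A where "A = a \<bullet> a"
    have A0: "A \<ge> 0" unfolding A_def by simp
    have key: "2 * t * p \<le> t^2 * A" for t
    proof -
      have "supp (y + t *\<^sub>R z) \<subseteq> I"
        using supp_add[of y "t *\<^sub>R z"] supp_scaleR[of t z] y z by blast
      moreover have "x - Phi *v (y + t *\<^sub>R z) = r - t *\<^sub>R a"
        by (simp add: y(2) a_def algebra_simps)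
      ultimately have "norm r \<le> norm (r - t *\<^sub>R a)" using mn y(2) by metis
      hence "(norm r)^2 \<le> (norm (r - t *\<^sub>R a))^2" by simp
      thus ?thesis unfolding power2_norm_eq_inner p_def A_def
        by (simp add: inner_diff_left inner_diff_right inner_commute power2_eq_square algebra_simps)
    qed
    have "p = 0" using quad0[OF key A0] .
    thus ?thesis unfolding p_def a_def by simp
  qed
  with y that show ?thesis by blast
qed

lemma half_eq: "(a::real) = b / 2 \<Longrightarrow> b = 2 * a" by simp

lemma RIC_inner:
  fixes Phi :: "real^'d^'N"
  assumes R: "RIC Phi m e" and e: "0 \<le> e" "e \<le> 1"
    and dis: "supp x \<inter> supp z = {}" and sp: "card (supp x \<union> supp z) \<le> m"
  shows "(Phi *v x) \<bullet> (Phi *v z) \<le> 2 * e * norm x * norm z"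
proof -
  have gen: "t * ((Phi *v x) \<bullet> (Phi *v z)) \<le> e * (t^2 * (norm x)^2 + (norm z)^2)" for t
  proof -
    let ?a = "t *\<^sub>R x"
    have sa: "supp (?a + z) \<subseteq> supp x \<union> supp z" "supp (?a - z) \<subseteq> supp x \<union> supp z"
      using supp_add[of ?a z] supp_diff[of ?a z] supp_scaleR[of t x] by blast+
    have o: "?a \<bullet> z = 0" using inner_disjoint[OF dis] by simp
    have n1: "(norm (?a + z))^2 = t^2 * (norm x)^2 + (norm z)^2"
      unfolding power2_norm_eq_inner using o
      by (simp add: inner_add_left inner_add_right inner_commute power2_eq_square)
    have n2: "(norm (?a - z))^2 = t^2 * (norm x)^2 + (norm z)^2"
      unfolding power2_norm_eq_inner using o
      by (simp add: inner_diff_left inner_diff_right inner_commute power2_eq_square)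
    have u: "norm (Phi *v (?a + z)) \<le> (1 + e) * norm (?a + z)"
      using R sparse_mono[OF sa(1) sp] unfolding RIC_def by blast
    have l: "(1 - e) * norm (?a - z) \<le> norm (Phi *v (?a - z))"
      using R sparse_mono[OF sa(2) sp] unfolding RIC_def by blast
    define N where "N = t^2 * (norm x)^2 + (norm z)^2"
    define P where "P = (Phi *v x) \<bullet> (Phi *v z)"
    have u2: "(norm (Phi *v (?a + z)))^2 \<le> ((1 + e) * norm (?a + z))^2"
      using u by (intro power_mono) auto
    have u3: "(norm (Phi *v (?a + z)))^2 \<le> (1 + e)^2 * N"
      using u2 n1 unfolding N_def by (simp only: power_mult_distrib)
    have l2: "((1 - e) * norm (?a - z))^2 \<le> (norm (Phi *v (?a - z)))^2"
      using l e by (intro power_mono) auto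
    have l3: "(1 - e)^2 * N \<le> (norm (Phi *v (?a - z)))^2"
      using l2 n2 unfolding N_def by (simp only: power_mult_distrib)
    have pa: "Phi *v (?a + z) = t *\<^sub>R (Phi *v x) + Phi *v z"
      by (simp only: matrix_vector_right_distrib matrix_vector_mult_scaleR)
    have pd: "Phi *v (?a - z) = t *\<^sub>R (Phi *v x) - Phi *v z"
      by (simp only: matrix_vector_mult_diff_distrib matrix_vector_mult_scaleR)
    have dn1: "(norm (Phi *v (?a + z)))^2 = 2 * (t * P) + (norm (t *\<^sub>R (Phi *v x)))^2 + (norm (Phi *v z))^2"
      unfolding pa using half_eq[OF dot_norm[of "t *\<^sub>R (Phi *v x)" "Phi *v z"]] unfolding P_def inner_scaleR_left by linarith
    have dn2: "(norm (Phi *v (?a - z)))^2 = (norm (t *\<^sub>R (Phi *v x)))^2 + (norm (Phi *v z))^2 - 2 * (t * P)"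
      unfolding pd using half_eq[OF dot_norm_neg[of "t *\<^sub>R (Phi *v x)" "Phi *v z"]] unfolding P_def inner_scaleR_left by linarith
    have "4 * (t * P) \<le> (1 + e)^2 * N - (1 - e)^2 * N" using u3 l3 dn1 dn2 by linarith
    also have "(1 + e)^2 * N - (1 - e)^2 * N = ((1 + e)^2 - (1 - e)^2) * N"
      by (simp only: left_diff_distrib)
    also have "(1 + e)^2 - (1 - e)^2 = 4 * e"
      by (simp add: power2_eq_square algebra_simps)
    finally show ?thesis unfolding P_def N_def by linarith
  qed
  show ?thesis
  proof (cases "x = 0")
    case True thus ?thesis by simp
  next
    case False
    hence nx: "norm x > 0" by simp
    from gen[of "norm z / norm x"] nx
    have "norm z / norm x * ((Phi *v x) \<bullet> (Phi *v z)) \<le> e * (2 * (norm z)^2)"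
      by (simp add: power2_eq_square)
    show ?thesis
    proof (cases "z = 0")
      case True thus ?thesis by simp
    next
      case False
      hence nz: "norm z > 0" by simp
      from gen[of "norm z / norm x"] nx
      have "norm z / norm x * ((Phi *v x) \<bullet> (Phi *v z)) \<le> e * (2 * (norm z)^2)"
        by (simp add: power2_eq_square)
      hence "norm z * ((Phi *v x) \<bullet> (Phi *v z)) \<le> norm x * (e * (2 * (norm z)^2))"
        using nx by (simp add: field_simps)
      hence "norm z * ((Phi *v x) \<bullet> (Phi *v z)) \<le> norm z * (2 * e * norm x * norm z)"
        by (simp add: power2_eq_square algebra_simps)
      thus ?thesis using nz by simp
    qed
  qed
qed

lemma top_sum:
  fixes u :: "real^'d"
  assumes id: "romp_identify n u J" and cT: "card T \<le> n"
  shows "(\<Sum>i\<in>T. (u$i)^2) \<le> (\<Sum>i\<in>J. (u$i)^2)"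
proof -
  have Js: "J \<subseteq> supp u" and cJ: "card J = min n (card (supp u))"
    and big: "\<And>i j. i \<in> J \<Longrightarrow> j \<notin> J \<Longrightarrow> \<bar>u$j\<bar> \<le> \<bar>u$i\<bar>"
    using id unfolding romp_identify_def by auto
  show ?thesis
  proof (cases "card J = card (supp u)")
    case True
    hence JS: "J = supp u" using Js by (simp add: card_subset_eq)
    have "(\<Sum>i\<in>T. (u$i)^2) = (\<Sum>i\<in>T \<inter> supp u. (u$i)^2)"
      by (rule sum.mono_neutral_right) (auto simp: supp_def)
    also have "\<dots> \<le> (\<Sum>i\<in>supp u. (u$i)^2)"
      by (rule sum_mono2) auto
    finally show ?thesis using JS by simp
  next
    case False
    hence cJn: "card J = n" using cJ by (simp add: min_def split: if_splits)
    have sT: "(\<Sum>i\<in>T. (u$i)^2) = (\<Sum>i\<in>T \<inter> J. (u$i)^2) + (\<Sum>i\<in>T - J. (u$i)^2)"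
      by (metis Int_commute finite sum.Int_Diff)
    have sJ: "(\<Sum>i\<in>J. (u$i)^2) = (\<Sum>i\<in>T \<inter> J. (u$i)^2) + (\<Sum>i\<in>J - T. (u$i)^2)"
      by (metis Int_commute finite sum.Int_Diff)
    have "(\<Sum>i\<in>T - J. (u$i)^2) \<le> (\<Sum>i\<in>J - T. (u$i)^2)"
    proof (cases "T - J = {}")
      case True thus ?thesis by (simp add: True sum_nonneg)
    next
      case False
      have c1: "card T = card (T \<inter> J) + card (T - J)"
        by (metis Int_commute card_Int_Diff finite)
      have c2: "card J = card (T \<inter> J) + card (J - T)"
        by (metis card_Int_Diff finite inf_commute)
      have cc: "card (T - J) \<le> card (J - T)" using c1 c2 cT cJn by linarith
      hence "J - T \<noteq> {}" using False by (metis card_0_eq finite le_zero_eq Diff_empty)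
      define mu where "mu = Min ((\<lambda>i. (u$i)^2) ` (J - T))"
      have lo: "\<forall>j\<in>J - T. mu \<le> (u$j)^2" unfolding mu_def by simp
      have "mu \<in> (\<lambda>i. (u$i)^2) ` (J - T)" unfolding mu_def
        by (rule Min_in) (use \<open>J - T \<noteq> {}\<close> in auto)
      then obtain j0 where j0: "j0 \<in> J - T" "mu = (u$j0)^2" by blast
      have hi: "\<forall>i\<in>T - J. (u$i)^2 \<le> mu"
      proof
        fix i assume i: "i \<in> T - J"
        have "\<bar>u$i\<bar> \<le> \<bar>u$j0\<bar>" using big[of j0 i] i j0 by auto
        hence "(u$i)^2 \<le> (u$j0)^2" by (simp add: abs_le_square_iff)
        thus "(u$i)^2 \<le> mu" using j0 by simp
      qed
      have mu0: "mu \<ge> 0" using j0 by simp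
      have "(\<Sum>i\<in>T - J. (u$i)^2) \<le> of_nat (card (T - J)) * mu"
        by (rule sum_bounded_above) (use hi in auto)
      also have "\<dots> \<le> of_nat (card (J - T)) * mu"
        using cc mu0 by (simp add: mult_right_mono)
      also have "\<dots> \<le> (\<Sum>i\<in>J - T. (u$i)^2)"
        by (rule sum_bounded_below) (use lo in auto)
      finally show ?thesis .
    qed
    thus ?thesis using sT sJ by linarith
  qed
qed

lemma reg_le:
  fixes u :: "real^'d"
  assumes reg: "romp_regularize u J J0" and K: "K \<subseteq> J" "comparable u K"
  shows "(\<Sum>i\<in>K. (u$i)^2) \<le> (\<Sum>i\<in>J0. (u$i)^2)"
proof -
  have "norm (restr u K) \<le> norm (restr u J0)" using reg K unfolding romp_regularize_def by blast
  hence "(norm (restr u K))^2 \<le> (norm (restr u J0))^2" by (simp add: power_mono)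
  thus ?thesis by (simp add: norm_restr_sq)
qed

lemma reg_induct:
  fixes u :: "real^'d"
  assumes reg: "romp_regularize u J J0"
  shows "t \<ge> 0 \<Longrightarrow> (\<Sum>i\<in>{i\<in>J. \<bar>u$i\<bar> \<le> t}. (u$i)^2)
          \<le> real m * (\<Sum>i\<in>J0. (u$i)^2) + real (card J) * (t / 2^m)^2"
proof (induction m arbitrary: t)
  case 0
  have "(\<Sum>i\<in>{i\<in>J. \<bar>u$i\<bar> \<le> t}. (u$i)^2) \<le> of_nat (card {i\<in>J. \<bar>u$i\<bar> \<le> t}) * t^2"
    by (rule sum_bounded_above) (use 0 in \<open>auto simp: abs_le_square_iff[symmetric]\<close>)
  also have "\<dots> \<le> real (card J) * t^2"
    by (rule mult_right_mono) (auto intro: card_mono)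
  finally show ?case by simp
next
  case (Suc m)
  let ?A = "{i\<in>J. \<bar>u$i\<bar> \<le> t}"
  let ?B = "{i\<in>J. t/2 < \<bar>u$i\<bar> \<and> \<bar>u$i\<bar> \<le> t}"
  let ?C = "{i\<in>J. \<bar>u$i\<bar> \<le> t/2}"
  have AB: "?A = ?B \<union> ?C" by auto
  have dis: "?B \<inter> ?C = {}" by auto
  have "(\<Sum>i\<in>?A. (u$i)^2) = (\<Sum>i\<in>?B. (u$i)^2) + (\<Sum>i\<in>?C. (u$i)^2)"
    unfolding AB by (rule sum.union_disjoint) (use dis in auto)
  moreover have "(\<Sum>i\<in>?B. (u$i)^2) \<le> (\<Sum>i\<in>J0. (u$i)^2)"
    by (rule reg_le[OF reg]) (auto simp: comparable_def)
  moreover have "(\<Sum>i\<in>?C. (u$i)^2) \<le> real m * (\<Sum>i\<in>J0. (u$i)^2) + real (card J) * ((t/2) / 2^m)^2"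
    using Suc.IH[of "t/2"] Suc.prems by simp
  moreover have "(t/2) / 2^m = t / 2^Suc m" by simp
  ultimately show ?case by (simp add: algebra_simps)
qed

lemma ln2_half: "1/2 \<le> ln (2::real)"
proof -
  have "exp (1/2::real) * exp (1/2) = exp 1" by (simp flip: exp_add)
  also have "\<dots> \<le> 3" by (rule exp_le)
  finally have "exp (1/2::real) * exp (1/2) \<le> 3" .
  have "exp (1/2::real) \<le> 2"
  proof (rule ccontr)
    assume "\<not> exp (1/2::real) \<le> 2"
    hence "exp (1/2::real) * exp (1/2) > 2 * 2" by (intro mult_strict_mono) auto
    thus False using \<open>exp (1/2::real) * exp (1/2) \<le> 3\<close> by simp
  qed
  thus ?thesis using ln_ge_iff[of 2 "1/2"] by (simp only: zero_less_numeral simp_thms)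
qed

lemma eps_facts:
  assumes e: "e = 0.03 / sqrt (ln (real n))" and n: "n \<ge> 1"
  shows "0 \<le> e" "e \<le> 0.05" "n \<ge> 2 \<Longrightarrow> e^2 * ln (real n) = 0.0009" "n = 1 \<Longrightarrow> e = 0"
proof -
  have l0: "ln (real n) \<ge> 0" using n by simp
  show "0 \<le> e" using e l0 by simp
  show "n = 1 \<Longrightarrow> e = 0" using e by simp
  have sq: "e^2 = 0.0009 / ln (real n)" using e l0 by (simp add: power_divide)
  show "n \<ge> 2 \<Longrightarrow> e^2 * ln (real n) = 0.0009"
  proof -
    assume "n \<ge> 2"
    hence "ln (real n) > 0" by simp
    thus ?thesis using sq by simp
  qed
  show "e \<le> 0.05"
  proof (cases "n = 1")
    case True thus ?thesis using e by simp
  next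
    case False
    hence n2: "real n \<ge> 2" using n by simp
    have "ln (real n) \<ge> ln 2" using n2 by simp
    hence ln: "ln (real n) \<ge> 1/2" using ln2_half by linarith
    have "e^2 \<le> 0.0009 / (1/2)" unfolding sq using ln
      by (intro divide_left_mono) auto
    also have "\<dots> \<le> 0.05^2" by (simp add: power2_eq_square)
    finally have "e^2 \<le> 0.05^2" .
    thus ?thesis using \<open>0 \<le> e\<close> by (simp add: abs_le_square_iff[symmetric] power2_le_iff_abs_le)
  qed
qed

lemma reg_bound:
  fixes u :: "real^'d"
  assumes reg: "romp_regularize u J J0" and cJ: "card J \<le> n" and n2: "n \<ge> 2" and Jne: "J \<noteq> {}"
  shows "(\<Sum>i\<in>J. (u$i)^2) \<le> 6 * ln (real n) * (\<Sum>i\<in>J0. (u$i)^2)"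
proof -
  define E where "E = (\<Sum>i\<in>J0. (u$i)^2)"
  define M where "M = Max ((\<lambda>i. \<bar>u$i\<bar>) ` J)"
  have "M \<in> (\<lambda>i. \<bar>u$i\<bar>) ` J" unfolding M_def by (rule Max_in) (use Jne in auto)
  then obtain i0 where i0: "i0 \<in> J" "M = \<bar>u$i0\<bar>" by blast
  have Mge: "\<And>i. i \<in> J \<Longrightarrow> \<bar>u$i\<bar> \<le> M" unfolding M_def by simp
  have M0: "M \<ge> 0" using i0 by simp
  have ME: "M^2 \<le> E"
  proof -
    have "(\<Sum>i\<in>{i0}. (u$i)^2) \<le> E" unfolding E_def
      by (rule reg_le[OF reg]) (use i0 in \<open>auto simp: comparable_def\<close>)
    thus ?thesis using i0 by simp
  qed
  have E0: "E \<ge> 0" using ME by (meson order_trans zero_le_power2)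
  define m where "m = (LEAST m. n \<le> 2^m)"
  have ex: "n \<le> 2^n" by (simp add: less_imp_le less_exp)
  have nm: "n \<le> 2^m" unfolding m_def by (rule LeastI[of _ n]) (rule ex)
  have m1: "m \<ge> 1"
  proof (rule ccontr)
    assume "\<not> m \<ge> 1" hence "m = 0" by simp
    thus False using nm n2 by simp
  qed
  have lt: "2^(m-1) < n"
  proof (rule ccontr)
    assume "\<not> 2^(m-1) < n"
    hence "n \<le> 2^(m-1)" by simp
    hence "m \<le> m - 1" unfolding m_def by (rule Least_le)
    thus False using m1 by simp
  qed
  have JM: "{i\<in>J. \<bar>u$i\<bar> \<le> M} = J" using Mge by auto
  have "(\<Sum>i\<in>J. (u$i)^2) \<le> real m * E + real (card J) * (M / 2^m)^2"
    using reg_induct[OF reg M0, of m] unfolding JM E_def .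
  also have "real (card J) * (M / 2^m)^2 \<le> E"
  proof -
    have "real (card J) * (M / 2^m)^2 \<le> real (2^m) * (M / 2^m)^2"
      using cJ nm by (intro mult_right_mono) auto
    also have "\<dots> = M^2 / 2^m" by (simp add: power_divide power2_eq_square)
    also have "\<dots> \<le> M^2"
    proof -
      have "(1::real) \<le> 2^m" by simp
      hence "M^2 * 1 \<le> M^2 * 2^m" by (intro mult_left_mono) auto
      thus ?thesis by (simp add: divide_le_eq)
    qed
    finally show ?thesis using ME by linarith
  qed
  hence "real m * E + real (card J) * (M / 2^m)^2 \<le> (real m + 1) * E" by (simp add: algebra_simps)
  also have "(real m + 1) * E \<le> 6 * ln (real n) * E"
  proof (rule mult_right_mono[OF _ E0])
    have "real (2^(m-1)) < real n" using lt by (simp only: of_nat_less_iff)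
    hence lt2: "(2::real)^(m-1) < real n" by simp
    have "ln ((2::real)^(m-1)) < ln (real n)"
      using lt2 by (subst ln_less_cancel_iff) auto
    hence a: "real (m-1) * ln 2 < ln (real n)" by (simp add: ln_realpow)
    have h: "ln (2::real) \<ge> 1/2" by (rule ln2_half)
    have b: "real (m - 1) * (1/2) \<le> real (m-1) * ln 2" using h by (intro mult_left_mono) auto
    have "real n \<ge> 2" using n2 by simp
    hence "ln (real n) \<ge> ln 2" by simp
    hence ln: "ln (real n) \<ge> 1/2" using h by linarith
    have "real (m - 1) = real m - 1" using m1 by simp
    thus "real m + 1 \<le> 6 * ln (real n)" using a b ln by linarith
  qed
  finally show ?thesis unfolding E_def .
qed

lemma norm_restr_le: "norm (restr (y::real^'d) T) \<le> norm y"
proof -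
  have "(norm (restr y T))^2 \<le> (norm y)^2"
    unfolding norm_restr_sq[of y T] norm_sq_vec[of y] by (rule sum_mono2) auto
  thus ?thesis by (rule power2_le_imp_le) simp
qed

lemma restr_norm_le_sum:
  assumes "(\<Sum>i\<in>T. ((y::real^'d)$i)^2) \<le> (\<Sum>i\<in>J. (y$i)^2)"
  shows "norm (restr y T) \<le> norm (restr y J)"
proof -
  have "(norm (restr y T))^2 \<le> (norm (restr y J))^2" using assms by (simp add: norm_restr_sq)
  thus ?thesis by (rule power2_le_imp_le) simp
qed

lemma step_core:
  fixes Phi :: "real^'d^'N" and v :: "real^'d" and n :: nat
    and I J :: "'d set" and r :: "real^'N" and u :: "real^'d" and e :: real
  assumes R: "RIC Phi (2 * n) e" and e: "e = 0.03 / sqrt (ln (real n))"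
    and vnz: "v \<noteq> 0" and sp: "sparse n v"
    and Wc: "card (supp v \<union> I) \<le> 2 * n"
    and lsq: "lsq_residual Phi (Phi *v v) I r" and rnz: "r \<noteq> 0"
    and u: "u = transpose Phi *v r" and idf: "romp_identify n u J"
  shows "0.8 * norm (restr v (supp v - I)) \<le> norm (restr u J)"
    and "romp_regularize u J J0 \<Longrightarrow> J0 \<inter> I = {} \<and> card (J0 - supp v) \<le> card (J0 \<inter> supp v)"
proof -
  obtain y where y: "supp y \<subseteq> I" "r = Phi *v v - Phi *v y"
    and orth: "\<And>z. supp z \<subseteq> I \<Longrightarrow> r \<bullet> (Phi *v z) = 0"
    using lsq_orth[OF lsq] by blast
  define S where "S = supp v"
  define T where "T = S - I"
  define w where "w = v - y"
  have rw: "r = Phi *v w" unfolding w_def by (simp only: y(2) matrix_vector_mult_diff_distrib)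
  have cS: "card S \<le> n" using sp unfolding sparse_def S_def .
  have "S \<noteq> {}" using vnz unfolding S_def supp_def by (auto simp: vec_eq_iff)
  hence "card S \<ge> 1" by (simp add: Suc_leI card_gt_0_iff)
  hence n1: "n \<ge> 1" using cS by linarith
  note ef = eps_facts[OF e n1]
  have suppw: "supp w \<subseteq> S \<union> I" using y(1) unfolding w_def S_def supp_def by auto
  have spw: "sparse (2 * n) w" by (rule sparse_mono[OF suppw]) (use Wc S_def in simp)
  have low: "(1 - e) * norm w \<le> norm r" using R spw unfolding RIC_def rw by blast
  define v0 where "v0 = restr v T"
  have yT: "\<And>i. i \<in> T \<Longrightarrow> y$i = 0" using y(1) unfolding T_def supp_def by auto
  have v0w: "v0 = restr w T" unfolding v0_def w_def by (simp add: vec_eq_iff yT)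
  have dI: "supp (w - v0) \<subseteq> I"
    unfolding v0w w_def supp_def T_def S_def using y(1) by (auto simp: supp_def)
  have rv0: "r \<bullet> (Phi *v v0) = r \<bullet> r"
  proof -
    have "Phi *v v0 = Phi *v w - Phi *v (w - v0)" by (simp add: matrix_vector_mult_diff_distrib)
    hence "r \<bullet> (Phi *v v0) = r \<bullet> (Phi *v w) - r \<bullet> (Phi *v (w - v0))" by (simp add: inner_diff_right)
    thus ?thesis using orth[OF dI] rw by simp
  qed
  have supv0: "supp v0 \<subseteq> T" unfolding v0_def using supp_restr by blast
  have "u \<bullet> v0 = r \<bullet> r" unfolding u transpose_inner rv0 ..
  moreover have "u \<bullet> v0 = restr u T \<bullet> v0" by (rule inner_restr[OF supv0])
  moreover have "restr u T \<bullet> v0 \<le> norm (restr u T) * norm v0" by (rule norm_cauchy_schwarz)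
  ultimately have cs: "(norm r)^2 \<le> norm (restr u T) * norm v0" by (simp add: power2_norm_eq_inner)
  have nv0w: "norm v0 \<le> norm w" unfolding v0w by (rule norm_restr_le)
  have e1: "0 \<le> 1 - e" using ef by simp
  have lowsq: "((1 - e) * norm w)^2 \<le> (norm r)^2"
    using low e1 by (intro power_mono) auto
  have "card T \<le> card S" by (rule card_mono) (auto simp: T_def)
  hence cT: "card T \<le> n" using cS by linarith
  have topT: "norm (restr u T) \<le> norm (restr u J)"
    by (rule restr_norm_le_sum[OF top_sum[OF idf cT]])
  have sq9: "(1 - e)^2 \<ge> 0.9"
  proof -
    have "(0.95::real)^2 \<le> (1 - e)^2" using ef by (intro power_mono) auto
    thus ?thesis by (simp add: power2_eq_square)
  qed
  show "0.8 * norm (restr v (supp v - I)) \<le> norm (restr u J)"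
  proof (cases "v0 = 0")
    case True thus ?thesis using v0_def S_def T_def by simp
  next
    case False
    hence pv: "norm v0 > 0" by simp
    have "(1 - e)^2 * (norm v0)^2 \<le> (1 - e)^2 * (norm w)^2"
      using nv0w by (intro mult_left_mono power_mono) auto
    also have "\<dots> \<le> norm (restr u T) * norm v0" using lowsq cs by (simp add: power_mult_distrib)
    finally have "((1 - e)^2 * norm v0) * norm v0 \<le> norm (restr u T) * norm v0"
      by (simp add: power2_eq_square mult_ac)
    hence a: "(1 - e)^2 * norm v0 \<le> norm (restr u T)" using pv by simp
    have "0.8 * norm v0 \<le> (1 - e)^2 * norm v0" using sq9 pv by (intro mult_right_mono) auto
    thus ?thesis using a topT unfolding v0_def T_def S_def by linarith
  qed

  have wnz: "w \<noteq> 0" using rnz rw by auto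
  hence pw: "norm w > 0" by simp
  have uT: "(1 - e)^2 * norm w \<le> norm (restr u T)"
  proof -
    have "(1 - e)^2 * (norm w)^2 \<le> norm (restr u T) * norm v0"
      using lowsq cs by (simp add: power_mult_distrib)
    also have "\<dots> \<le> norm (restr u T) * norm w" using nv0w by (intro mult_left_mono) auto
    finally have "((1 - e)^2 * norm w) * norm w \<le> norm (restr u T) * norm w"
      by (simp add: power2_eq_square mult_ac)
    thus ?thesis using pw by simp
  qed
  have uI: "\<And>i. i \<in> I \<Longrightarrow> u$i = 0"
  proof -
    fix i assume i: "i \<in> I"
    have "supp (axis i (1::real)) \<subseteq> I" using i by (auto simp: supp_def axis_def)
    hence "r \<bullet> (Phi *v axis i 1) = 0" by (rule orth)
    moreover have "u$i = u \<bullet> axis i 1" by (rule cart_eq_inner_axis)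
    moreover have "u \<bullet> axis i 1 = r \<bullet> (Phi *v axis i 1)" unfolding u by (rule transpose_inner)
    ultimately show "u$i = 0" by simp
  qed
  have Jsu: "J \<subseteq> supp u" and cJ: "card J \<le> n"
    using idf unfolding romp_identify_def by auto
  assume reg: "romp_regularize u J J0"
  have J0J: "J0 \<subseteq> J" and comp: "comparable u J0" using reg unfolding romp_regularize_def by auto
  have dis: "J0 \<inter> I = {}" using J0J Jsu uI unfolding supp_def by auto
  have "card (J0 - S) \<le> card (J0 \<inter> S)"
  proof (rule ccontr)
    assume "\<not> card (J0 - S) \<le> card (J0 \<inter> S)"
    hence cLK: "card (J0 \<inter> S) < card (J0 - S)" by simp
    define K where "K = J0 - S"
    define L where "L = J0 \<inter> S"
    have Kne: "K \<noteq> {}"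
    proof
      assume "K = {}" hence "J0 - S = {}" unfolding K_def .
      hence "card (J0 - S) = 0" by (simp only: card.empty)
      thus False using cLK by linarith
    qed
    have KJ: "K \<subseteq> J" using J0J unfolding K_def by auto
    have cK: "card K \<le> n" using card_mono[OF finite KJ] cJ by linarith
    have KW: "K \<inter> (S \<union> I) = {}" using dis unfolding K_def by auto
    define z where "z = restr u K"
    have suppz: "supp z \<subseteq> K" unfolding z_def using supp_restr by blast
    have zz: "(norm z)^2 = (\<Sum>i\<in>K. (u$i)^2)" unfolding z_def by (rule norm_restr_sq)
    have uz: "u \<bullet> z = (norm z)^2"
      using inner_restr[OF suppz, of u] unfolding z_def[symmetric] by (simp add: power2_norm_eq_inner)
    have uz2: "u \<bullet> z = (Phi *v w) \<bullet> (Phi *v z)" unfolding u transpose_inner rw ..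
    define W0 where "W0 = S \<union> I"
    obtain W1 where W1: "W1 \<subseteq> W0" "card W1 \<le> n" "card (W0 - W1) \<le> n"
    proof (cases "card W0 \<le> n")
      case True thus ?thesis using that[of W0] by simp
    next
      case False
      then obtain W1 where "W1 \<subseteq> W0" "card W1 = n" "finite W1"
        using obtain_subset_with_card_n[of n W0] by auto
      moreover have "card (W0 - W1) = card W0 - card W1"
        using \<open>W1 \<subseteq> W0\<close> by (simp add: card_Diff_subset)
      ultimately show ?thesis using that[of W1] Wc unfolding W0_def S_def by simp
    qed
    define w1 where "w1 = restr w W1"
    define w2 where "w2 = restr w (W0 - W1)"
    have wsplit: "w = w1 + w2"
      unfolding w1_def w2_def vec_eq_iff using suppw W1(1) unfolding W0_def supp_def by auto
    have e1': "e \<le> 1" using ef by simp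
    have in1: "(Phi *v w1) \<bullet> (Phi *v z) \<le> 2 * e * norm w1 * norm z"
    proof (rule RIC_inner[OF R ef(1) e1'])
      have "supp w1 \<subseteq> W1" unfolding w1_def using supp_restr by blast
      thus "supp w1 \<inter> supp z = {}" using suppz KW W1(1) unfolding W0_def by blast
      have "card (supp w1 \<union> supp z) \<le> card (W1 \<union> K)"
        using \<open>supp w1 \<subseteq> W1\<close> suppz by (intro card_mono) auto
      also have "\<dots> \<le> card W1 + card K" by (rule card_Un_le)
      finally show "card (supp w1 \<union> supp z) \<le> 2 * n" using W1(2) cK by linarith
    qed
    have in2: "(Phi *v w2) \<bullet> (Phi *v z) \<le> 2 * e * norm w2 * norm z"
    proof (rule RIC_inner[OF R ef(1) e1'])
      have "supp w2 \<subseteq> W0 - W1" unfolding w2_def using supp_restr by blast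
      thus "supp w2 \<inter> supp z = {}" using suppz KW unfolding W0_def by blast
      have "card (supp w2 \<union> supp z) \<le> card ((W0 - W1) \<union> K)"
        using \<open>supp w2 \<subseteq> W0 - W1\<close> suppz by (intro card_mono) auto
      also have "\<dots> \<le> card (W0 - W1) + card K" by (rule card_Un_le)
      finally show "card (supp w2 \<union> supp z) \<le> 2 * n" using W1(3) cK by linarith
    qed
    have nw1: "norm w1 \<le> norm w" unfolding w1_def by (rule norm_restr_le)
    have nw2: "norm w2 \<le> norm w" unfolding w2_def by (rule norm_restr_le)
    have "(Phi *v w) \<bullet> (Phi *v z) = (Phi *v w1) \<bullet> (Phi *v z) + (Phi *v w2) \<bullet> (Phi *v z)"
      unfolding wsplit by (simp only: matrix_vector_right_distrib inner_add_left)
    also have "\<dots> \<le> 2 * e * norm w1 * norm z + 2 * e * norm w2 * norm z" using in1 in2 by linarith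
    also have "\<dots> \<le> 2 * e * norm w * norm z + 2 * e * norm w * norm z"
      using nw1 nw2 ef(1) by (intro add_mono mult_right_mono mult_left_mono) auto
    finally have zb: "(norm z)^2 \<le> (4 * e * norm w) * norm z" using uz uz2 by simp
    obtain k0 where k0: "k0 \<in> K" using Kne by blast
    have "u$k0 \<noteq> 0" using k0 KJ Jsu unfolding supp_def by auto
    hence "z \<noteq> 0" using k0 unfolding z_def by (auto simp: vec_eq_iff)
    hence pz: "norm z > 0" by simp
    have zle: "norm z \<le> 4 * e * norm w"
      using zb pz by (simp add: power2_eq_square)
    have epos: "e > 0"
    proof (rule ccontr)
      assume "\<not> e > 0" hence "e = 0" using ef(1) by simp
      thus False using zle pz by simp
    qed
    have n2: "n \<ge> 2"
    proof (rule ccontr)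
      assume "\<not> n \<ge> 2" hence "n = 1" using n1 by simp
      thus False using ef(4) epos by simp
    qed
    define mu where "mu = Min ((\<lambda>i. (u$i)^2) ` K)"
    have "mu \<in> (\<lambda>i. (u$i)^2) ` K" unfolding mu_def by (rule Min_in) (use Kne in auto)
    then obtain k1 where k1: "k1 \<in> K" "mu = (u$k1)^2" by blast
    have lo: "\<forall>k\<in>K. mu \<le> (u$k)^2" unfolding mu_def by simp
    have hiL: "\<forall>l\<in>L. (u$l)^2 \<le> 4 * mu"
    proof
      fix l assume l: "l \<in> L"
      have "\<bar>u$l\<bar> \<le> 2 * \<bar>u$k1\<bar>" using comp l k1(1) unfolding comparable_def K_def L_def by auto
      hence "\<bar>u$l\<bar>^2 \<le> (2 * \<bar>u$k1\<bar>)^2" by (intro power_mono) auto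
      thus "(u$l)^2 \<le> 4 * mu" using k1(2) by (simp add: power_mult_distrib)
    qed
    have mu0: "mu \<ge> 0" using k1 by simp
    have sL: "(\<Sum>i\<in>L. (u$i)^2) \<le> 4 * (\<Sum>i\<in>K. (u$i)^2)"
    proof -
      have "(\<Sum>i\<in>L. (u$i)^2) \<le> of_nat (card L) * (4 * mu)"
        by (rule sum_bounded_above) (use hiL in auto)
      also have "\<dots> \<le> of_nat (card K) * (4 * mu)"
        using cLK mu0 unfolding K_def L_def by (intro mult_right_mono) auto
      also have "of_nat (card K) * mu \<le> (\<Sum>i\<in>K. (u$i)^2)"
        by (rule sum_bounded_below) (use lo in auto)
      hence "of_nat (card K) * (4 * mu) \<le> 4 * (\<Sum>i\<in>K. (u$i)^2)" by simp
      finally show ?thesis .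
    qed
    have J0KL: "J0 = K \<union> L" "K \<inter> L = {}" unfolding K_def L_def by auto
    have EJ0: "(\<Sum>i\<in>J0. (u$i)^2) = (\<Sum>i\<in>K. (u$i)^2) + (\<Sum>i\<in>L. (u$i)^2)"
      unfolding J0KL(1) by (rule sum.union_disjoint) (use J0KL(2) in auto)
    have Eup: "(\<Sum>i\<in>J0. (u$i)^2) \<le> 5 * (16 * e^2 * (norm w)^2)"
    proof -
      have "(norm z)^2 \<le> (4 * e * norm w)^2" using zle pz by (intro power_mono) auto
      hence "(\<Sum>i\<in>K. (u$i)^2) \<le> 16 * e^2 * (norm w)^2" unfolding zz by (simp add: power_mult_distrib)
      thus ?thesis using EJ0 sL by linarith
    qed
    have Jne: "J \<noteq> {}" using KJ Kne by auto
    have up: "(\<Sum>i\<in>J. (u$i)^2) \<le> 6 * ln (real n) * (5 * (16 * e^2 * (norm w)^2))"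
    proof -
      have l0: "ln (real n) \<ge> 0" using n2 by simp
      have "(\<Sum>i\<in>J. (u$i)^2) \<le> 6 * ln (real n) * (\<Sum>i\<in>J0. (u$i)^2)"
        by (rule reg_bound[OF reg cJ n2 Jne])
      also have "\<dots> \<le> 6 * ln (real n) * (5 * (16 * e^2 * (norm w)^2))"
        using Eup l0 by (intro mult_left_mono) auto
      finally show ?thesis .
    qed
    have "6 * ln (real n) * (5 * (16 * e^2 * (norm w)^2)) = 480 * (e^2 * ln (real n)) * (norm w)^2"
      by (simp add: algebra_simps)
    also have "\<dots> = 0.432 * (norm w)^2" unfolding ef(3)[OF n2] by simp
    finally have up2: "(\<Sum>i\<in>J. (u$i)^2) \<le> 0.432 * (norm w)^2" using up by linarith
    have "(\<Sum>i\<in>T. (u$i)^2) = (norm (restr u T))^2" by (simp add: norm_restr_sq)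
    also have "((1 - e)^2 * norm w)^2 \<le> (norm (restr u T))^2"
      using uT ef by (intro power_mono) auto
    hence "0.81 * (norm w)^2 \<le> (norm (restr u T))^2"
    proof -
      have "(0.9::real)^2 \<le> ((1 - e)^2)^2" using sq9 by (intro power_mono) auto
      hence "0.81 * (norm w)^2 \<le> ((1 - e)^2)^2 * (norm w)^2" by (intro mult_right_mono) (auto simp: power2_eq_square)
      thus ?thesis using \<open>((1 - e)^2 * norm w)^2 \<le> (norm (restr u T))^2\<close> by (simp add: power_mult_distrib)
    qed
    hence lowT: "0.81 * (norm w)^2 \<le> (\<Sum>i\<in>T. (u$i)^2)" by (simp add: norm_restr_sq)
    have "(\<Sum>i\<in>T. (u$i)^2) \<le> (\<Sum>i\<in>J. (u$i)^2)" by (rule top_sum[OF idf cT])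
    hence "0.81 * (norm w)^2 \<le> 0.432 * (norm w)^2" using lowT up2 by linarith
    thus False using pw by simp
  qed
  thus "J0 \<inter> I = {} \<and> card (J0 - supp v) \<le> card (J0 \<inter> supp v)" using dis unfolding S_def by simp
qed

lemma card_W:
  fixes S I :: "'d::finite set"
  assumes "card (I - S) \<le> card (I \<inter> S)" "card S \<le> n"
  shows "card (S \<union> I) \<le> 2 * n"
proof -
  have "S \<union> I = S \<union> (I - S)" by auto
  moreover have "card (S \<union> (I - S)) = card S + card (I - S)" by (rule card_Un_disjoint) auto
  ultimately have "card (S \<union> I) = card S + card (I - S)" by simp
  moreover have "card (I \<inter> S) \<le> card S" by (rule card_mono) auto
  ultimately show ?thesis using assms by linarith
qed

lemma romp_invariant:
  fixes Phi :: "real^'d^'N" and v :: "real^'d" and n :: nat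
  assumes R: "RIC Phi (2 * n) (0.03 / sqrt (ln (real n)))"
    and vnz: "v \<noteq> 0" and sp: "sparse n v"
    and reach: "romp_reach Phi (Phi *v v) n I"
  shows "card (I - supp v) \<le> card (I \<inter> supp v)"
  using reach
proof (induction rule: romp_reach.induct)
  case init thus ?case by simp
next
  case (step I r u J J0)
  have cS: "card (supp v) \<le> n" using sp unfolding sparse_def .
  have Wc: "card (supp v \<union> I) \<le> 2 * n" by (rule card_W[OF step.IH cS])
  have c: "J0 \<inter> I = {} \<and> card (J0 - supp v) \<le> card (J0 \<inter> supp v)"
    by (rule step_core(2)[OF R refl vnz sp Wc step.hyps(2) step.hyps(3) step.hyps(4) step.hyps(5) step.hyps(6)])
  have d1: "(I \<union> J0) - supp v = (I - supp v) \<union> (J0 - supp v)" by auto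
  have d2: "(I \<union> J0) \<inter> supp v = (I \<inter> supp v) \<union> (J0 \<inter> supp v)" by auto
  have "card ((I \<union> J0) - supp v) = card (I - supp v) + card (J0 - supp v)"
    unfolding d1 by (rule card_Un_disjoint) (use c in auto)
  moreover have "card ((I \<union> J0) \<inter> supp v) = card (I \<inter> supp v) + card (J0 \<inter> supp v)"
    unfolding d2 by (rule card_Un_disjoint) (use c in auto)
  ultimately show ?case using step.IH c by linarith
qed

theorem lemma3p6:
  fixes Phi :: "real^'d^'N" and v :: "real^'d" and n :: nat
    and I J :: "'d set" and r :: "real^'N" and u :: "real^'d"
  assumes "RIC Phi (2 * n) (0.03 / sqrt (ln (real n)))"
    and "v \<noteq> 0" and "sparse n v"
    and "romp_reach Phi (Phi *v v) n I"
    and "lsq_residual Phi (Phi *v v) I r" and "r \<noteq> 0"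
    and "u = transpose Phi *v r"
    and "romp_identify n u J"
  shows "norm (restr u J) \<ge> 0.8 * norm (restr v (supp v - I))"
proof -
  have inv: "card (I - supp v) \<le> card (I \<inter> supp v)"
    by (rule romp_invariant[OF assms(1-4)])
  have cS: "card (supp v) \<le> n" using assms(3) unfolding sparse_def .
  have Wc: "card (supp v \<union> I) \<le> 2 * n" by (rule card_W[OF inv cS])
  show ?thesis
    by (rule step_core(1)[OF assms(1) refl assms(2) assms(3) Wc assms(5) assms(6) assms(7) assms(8)])
qed

end
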